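(* Let $\mu$ be a nonzero finite Borel measure on $\mathbb{R}$ with compact support, with moments $y_k=\int x^k d\mu$ and $\mathbf{y}=(y_k)_{k\in\mathbb{N}}$. For $d\in\mathbb{N}$ consider the semidefinite program $$\rho_d=\min_{a,b\in\mathbb{R}}\{\,b-a:\ \mathbf{H}_d(\theta_a\,\mathbf{y})\succeq0,\ \mathbf{H}_d(-\theta_b\,\mathbf{y})\succeq0\,\}.$$ Then (a) this program has an optimal solution $(a_d,b_d)$ for every $d\in\mathbb{N}$; (b) for any sequence $(a_d,b_d)_{d\in\mathbb{N}}$ of optimal solutions, $(a_d,b_d)\to(a^*,b^* )$ as $d\to\infty$ for some real $a^*\le b^*$ with $\mathrm{supp}\,\mu\subseteq[a^*,b^*]$; moreover $[a^*,b^*]$ is the smallest closed interval containing $\mathrm{supp}\,\mu$, and if $\mathrm{supp}\,\mu$ is an interval then $\mathrm{supp}\,\mu=[a^*,b^*]$.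
   Context: For a sequence $\mathbf{y}=(y_k)_{k\in\mathbb{N}}$ and a polynomial $\theta(x)=\sum_{k=0}^s\theta_kx^k$, $\mathbf{H}_d(\theta\,\mathbf{y})$ is the $(d+1)\times(d+1)$ symmetric matrix with entries $\sum_{k=0}^s\theta_k\,y_{i+j+k-2}$, $i,j=1,\ldots,d+1$. For $a\in\mathbb{R}$, $\theta_a(x)=x-a$; thus $\mathbf{H}_d(\theta_a\mathbf{y})(i,j)=y_{i+j-1}-a\,y_{i+j-2}$ and $\mathbf{H}_d(-\theta_b\mathbf{y})(i,j)=b\,y_{i+j-2}-y_{i+j-1}$. $\succeq0$ denotes positive semidefiniteness. $\mathrm{supp}\,\mu$ is the smallest closed set whose complement has $\mu$-measure zero. *)

theory Defs
  imports "HOL-Analysis.Analysis" "HOL-Probability.Probability" "HOL-Computational_Algebra.Polynomial"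
begin

definition moment_seq :: "real measure \<Rightarrow> nat \<Rightarrow> real" where
  "moment_seq M k = integral\<^sup>L M (\<lambda>x. x ^ k)"

definition measure_support :: "real measure \<Rightarrow> real set" where
  "measure_support M = \<Inter> {C. closed C \<and> emeasure M (- C) = 0}"

(* localizing Hankel matrix H_d(\<theta> y), 0-based indices i,j \<in> {0..d}:
   entry (i,j) = \<Sum>_k \<theta>_k y_(i+j+k)   (paper's (i+1,j+1) entry) *)
definition hankel_loc :: "nat \<Rightarrow> real poly \<Rightarrow> (nat \<Rightarrow> real) \<Rightarrow> nat \<Rightarrow> nat \<Rightarrow> real" where
  "hankel_loc d \<theta> y i j = (\<Sum>k\<le>degree \<theta>. coeff \<theta> k * y (i + j + k))"

definition psd :: "nat \<Rightarrow> (nat \<Rightarrow> nat \<Rightarrow> real) \<Rightarrow> bool" where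
  "psd d H \<longleftrightarrow> (\<forall>v :: nat \<Rightarrow> real. (\<Sum>i\<le>d. \<Sum>j\<le>d. v i * H i j * v j) \<ge> 0)"

definition theta :: "real \<Rightarrow> real poly" where
  "theta a = [:-a, 1:]"

definition sdp_feasible :: "(nat \<Rightarrow> real) \<Rightarrow> nat \<Rightarrow> real \<Rightarrow> real \<Rightarrow> bool" where
  "sdp_feasible y d a b \<longleftrightarrow>
     psd d (hankel_loc d (theta a) y) \<and> psd d (hankel_loc d (- theta b) y)"

definition sdp_optimal :: "(nat \<Rightarrow> real) \<Rightarrow> nat \<Rightarrow> real \<Rightarrow> real \<Rightarrow> bool" where
  "sdp_optimal y d a b \<longleftrightarrow> sdp_feasible y d a b \<and>
     (\<forall>a' b'. sdp_feasible y d a' b' \<longrightarrow> b - a \<le> b' - a')"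

end

theory Submission
  imports Defs
begin

locale SM =
  fixes M :: "real measure"
  assumes sets_M: "sets M = sets borel"
    and fin: "finite_measure M"
    and nz: "emeasure M UNIV \<noteq> 0"
    and cpt: "compact (measure_support M)"
begin

abbreviation "K \<equiv> measure_support M"

lemma space_M: "space M = UNIV"
  using sets_eq_imp_space_eq[OF sets_M] by simp

lemma null_compl: "emeasure M (- K) = 0"
proof -
  define F where "F = {- C | C. closed C \<and> emeasure M (- C) = 0}"
  have op: "\<And>S. S \<in> F \<Longrightarrow> open S" unfolding F_def by auto
  obtain F' where F': "F' \<subseteq> F" "countable F'" "\<Union>F' = \<Union>F"
    using Lindelof[OF op] by blast
  have "- K = \<Union>F"
    unfolding F_def measure_support_def by auto
  also have "\<dots> = (\<Union>S\<in>F'. S)" using F' by simp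
  finally have eq: "- K = (\<Union>S\<in>F'. S)" .
  have "(\<Union>S\<in>F'. S) \<in> null_sets M"
  proof (rule null_sets_UN'[OF F'(2)])
    fix S assume "S \<in> F'"
    then have "S \<in> F" using F' by blast
    then obtain C where C: "S = - C" "closed C" "emeasure M (- C) = 0"
      unfolding F_def by blast
    have "S \<in> sets M" using C sets_M by (simp add: borel_closed)
    then show "S \<in> null_sets M" using C by (simp add: null_sets_def)
  qed
  then show ?thesis using eq by (simp add: null_sets_def)
qed

lemma AE_K: "AE x in M. x \<in> K"
proof -
  have "closed K" using cpt compact_imp_closed by blast
  then have "- K \<in> null_sets M"
    using null_compl sets_M by (simp add: null_sets_def borel_open open_Compl)
  then show ?thesis
    by (intro AE_I'[where N="- K"]) (auto simp: space_M)
qed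

lemma K_ne: "K \<noteq> {}"
  using null_compl nz by auto

lemma pos_ball:
  assumes "c \<in> K" "r > 0"
  shows "measure M (ball c r) > 0"
proof -
  have "emeasure M (ball c r) \<noteq> 0"
  proof
    assume h: "emeasure M (ball c r) = 0"
    have "closed (- ball c r)" by auto
    then have "K \<subseteq> - ball c r"
      using h unfolding measure_support_def by auto
    then show False using assms by auto
  qed
  moreover have "measure M (ball c r) \<ge> 0" by simp
  ultimately show ?thesis
    using finite_measure.emeasure_eq_measure[OF fin]
    by (metis ennreal_0 order_le_less)
qed

lemma cont_bound:
  assumes "continuous_on UNIV f"
  shows "\<exists>B. \<forall>x\<in>K. \<bar>f x :: real\<bar> \<le> B"
proof -
  have "compact (f ` K)"
    using compact_continuous_image continuous_on_subset[OF assms] cpt by blast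
  then have "bounded (f ` K)" by (rule compact_imp_bounded)
  then show ?thesis by (auto simp: bounded_iff)
qed

lemma cont_meas:
  assumes "continuous_on UNIV f"
  shows "(f :: real \<Rightarrow> real) \<in> borel_measurable M"
  using borel_measurable_continuous_onI[OF assms] measurable_cong_sets[OF sets_M refl] by blast

lemma cont_integrable:
  assumes "continuous_on UNIV f"
  shows "integrable M (f :: real \<Rightarrow> real)"
proof -
  obtain B where B: "\<forall>x\<in>K. \<bar>f x\<bar> \<le> B" using cont_bound[OF assms] by blast
  have m: "f \<in> borel_measurable M"
    using borel_measurable_continuous_onI[OF assms] measurable_cong_sets[OF sets_M refl] by blast
  show ?thesis
    using AE_K B m by (intro finite_measure.integrable_const_bound[OF fin, where B=B]) auto
qed

lemma mono_int:
  assumes "\<And>x. f x \<le> g x" "continuous_on UNIV f" "continuous_on UNIV g"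
  shows "integral\<^sup>L M (f :: real \<Rightarrow> real) \<le> integral\<^sup>L M g"
  using assms by (intro integral_mono cont_integrable) auto

definition "s = Inf K"
definition "t = Sup K"

lemma s_t: "s \<in> K" "t \<in> K" "\<And>x. x \<in> K \<Longrightarrow> s \<le> x" "\<And>x. x \<in> K \<Longrightarrow> x \<le> t"
proof -
  have b: "bounded K" "closed K" using cpt compact_imp_bounded compact_imp_closed by auto
  show "s \<in> K" unfolding s_def using closed_contains_Inf[OF K_ne bounded_imp_bdd_below[OF b(1)] b(2)] .
  show "t \<in> K" unfolding t_def using closed_contains_Sup[OF K_ne bounded_imp_bdd_above[OF b(1)] b(2)] .
  show "\<And>x. x \<in> K \<Longrightarrow> s \<le> x" unfolding s_def using bounded_imp_bdd_below[OF b(1)] by (simp add: cInf_lower)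
  show "\<And>x. x \<in> K \<Longrightarrow> x \<le> t" unfolding t_def using bounded_imp_bdd_above[OF b(1)] by (simp add: cSup_upper)
qed

definition P :: "nat \<Rightarrow> (nat \<Rightarrow> real) \<Rightarrow> real \<Rightarrow> real" where
  "P d v x = (\<Sum>i\<le>d. v i * x ^ i)"

lemma cont_P[continuous_intros]: "continuous_on UNIV (P d v)"
  unfolding P_def by (intro continuous_intros)

lemma int_pow: "integrable M (\<lambda>x. x ^ k)"
  by (rule cont_integrable) (intro continuous_intros)

lemma QF:
  "(\<Sum>i\<le>d. \<Sum>j\<le>d. v i * (\<beta> * moment_seq M (i+j+1) + \<alpha> * moment_seq M (i+j)) * v j)
    = integral\<^sup>L M (\<lambda>x. (\<alpha> + \<beta> * x) * (P d v x)^2)"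
proof -
  have pw: "(\<alpha> + \<beta> * x) * (P d v x)^2 =
     (\<Sum>i\<le>d. \<Sum>j\<le>d. v i * (\<beta> * x^(i+j+1) + \<alpha> * x^(i+j)) * v j)" for x
  proof -
    have "(\<alpha> + \<beta> * x) * (P d v x)^2 = (\<alpha> + \<beta> * x) * (\<Sum>i\<le>d. \<Sum>j\<le>d. (v i * x^i) * (v j * x^j))"
      by (simp add: P_def power2_eq_square sum_product)
    also have "\<dots> = (\<Sum>i\<le>d. \<Sum>j\<le>d. (\<alpha> + \<beta> * x) * ((v i * x^i) * (v j * x^j)))"
      by (simp add: sum_distrib_left)
    also have "\<dots> = (\<Sum>i\<le>d. \<Sum>j\<le>d. v i * (\<beta> * x^(i+j+1) + \<alpha> * x^(i+j)) * v j)"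
      by (intro sum.cong refl) (simp add: algebra_simps power_add)
    finally show ?thesis .
  qed
  have "integral\<^sup>L M (\<lambda>x. (\<alpha> + \<beta> * x) * (P d v x)^2) =
     integral\<^sup>L M (\<lambda>x. \<Sum>i\<le>d. \<Sum>j\<le>d. v i * (\<beta> * x^(i+j+1) + \<alpha> * x^(i+j)) * v j)"
    by (simp add: pw)
  also have "\<dots> = (\<Sum>i\<le>d. \<Sum>j\<le>d. v i * (\<beta> * moment_seq M (i+j+1) + \<alpha> * moment_seq M (i+j)) * v j)"
    by (simp add: moment_seq_def cont_integrable continuous_intros integral_mult_right_zero int_pow)
  finally show ?thesis by simp
qed

lemma hankel_theta: "hankel_loc d (theta a) y i j = y(i+j+1) - a * y(i+j)"
  by (simp add: hankel_loc_def theta_def)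

lemma hankel_mtheta: "hankel_loc d (- theta b) y i j = b * y(i+j) - y(i+j+1)"
  by (simp add: hankel_loc_def theta_def)

lemma Fa: "psd d (hankel_loc d (theta a) (moment_seq M)) \<longleftrightarrow>
   (\<forall>v. integral\<^sup>L M (\<lambda>x. (x - a) * (P d v x)^2) \<ge> 0)"
  using QF[where d=d and \<beta>=1 and \<alpha>="-a"] unfolding psd_def hankel_theta by (simp add: algebra_simps)

lemma Fb: "psd d (hankel_loc d (- theta b) (moment_seq M)) \<longleftrightarrow>
   (\<forall>v. integral\<^sup>L M (\<lambda>x. (b - x) * (P d v x)^2) \<ge> 0)"
  using QF[where d=d and \<beta>="-1" and \<alpha>=b] unfolding psd_def hankel_mtheta by (simp add: algebra_simps)

lemma m0_pos: "measure M UNIV > 0"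
proof -
  have "measure M UNIV \<ge> 0" by simp
  moreover have "emeasure M UNIV = ennreal (measure M UNIV)"
    using finite_measure.emeasure_eq_measure[OF fin] by blast
  ultimately show ?thesis using nz by (metis ennreal_0 order_le_less)
qed

lemma int_const: "integral\<^sup>L M (\<lambda>x. c) = c * measure M UNIV"
  by (simp add: space_M)

lemma KEY:
  assumes c: "c \<in> K" and e: "\<epsilon> > 0"
  shows "\<exists>n w. integral\<^sup>L M (\<lambda>x. (\<epsilon> - \<bar>x - c\<bar>) * (P n w x)^2) > 0"
proof -
  define f where "f x = max 0 (1 - 2 * \<bar>x - c\<bar> / \<epsilon>)" for x
  define h where "h x = \<epsilon> - \<bar>x - c\<bar>" for x
  have cf: "continuous_on UNIV f" unfolding f_def using e by (intro continuous_intros) auto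
  have ch: "continuous_on UNIV h" unfolding h_def by (intro continuous_intros)
  have f01: "0 \<le> f x" "f x \<le> 1" for x using e unfolding f_def by auto
  define m0 where "m0 = measure M UNIV"
  have m0: "m0 > 0" unfolding m0_def by (rule m0_pos)
  define mb where "mb = measure M (ball c (\<epsilon>/4))"
  have mb: "mb > 0" unfolding mb_def using pos_ball[OF c] e by simp
  have cl1: "h x * (f x)^2 \<ge> (\<epsilon>/2) * (f x)^2" for x
  proof (cases "\<bar>x - c\<bar> \<le> \<epsilon>/2")
    case True
    then have "h x \<ge> \<epsilon>/2" unfolding h_def by simp
    then show ?thesis by (intro mult_right_mono) auto
  next
    case False
    then have "f x = 0" unfolding f_def using e by (auto simp: field_simps)
    then show ?thesis by simp
  qed
  have cl2: "(f x)^2 \<ge> (1/4) * indicator (ball c (\<epsilon>/4)) x" for x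
  proof (cases "x \<in> ball c (\<epsilon>/4)")
    case True
    then have "\<bar>x - c\<bar> < \<epsilon>/4" by (simp add: dist_real_def abs_minus_commute)
    then have "f x \<ge> 1/2" unfolding f_def using e by (auto simp: field_simps)
    then have "(f x)^2 \<ge> (1/2)^2" by (intro power_mono) auto
    then show ?thesis using True by (simp add: power2_eq_square)
  qed simp
  have ball_sets: "ball c (\<epsilon>/4) \<in> sets M" using sets_M by simp
  have ball_fin: "emeasure M (ball c (\<epsilon>/4)) < \<infinity>"
    using finite_measure.emeasure_finite[OF fin] by (simp add: less_top)
  have "integral\<^sup>L M (\<lambda>x. (1/4) * indicator (ball c (\<epsilon>/4)) x) \<le> integral\<^sup>L M (\<lambda>x. (f x)^2)"
  proof (rule integral_mono)
    show "integrable M (\<lambda>x. (1/4) * indicator (ball c (\<epsilon>/4)) x :: real)"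
      using ball_sets ball_fin by (intro integrable_mult_right integrable_real_indicator)
    show "integrable M (\<lambda>x. (f x)^2)" by (intro cont_integrable continuous_intros cf)
  qed (use cl2 in auto)
  then have i2: "integral\<^sup>L M (\<lambda>x. (f x)^2) \<ge> (1/4) * mb"
    unfolding mb_def by (simp add: space_M)
  have "integral\<^sup>L M (\<lambda>x. (\<epsilon>/2) * (f x)^2) \<le> integral\<^sup>L M (\<lambda>x. h x * (f x)^2)"
    using cl1 by (intro integral_mono cont_integrable) (auto intro!: continuous_intros cf ch)
  then have q1: "integral\<^sup>L M (\<lambda>x. h x * (f x)^2) \<ge> (\<epsilon>/2) * integral\<^sup>L M (\<lambda>x. (f x)^2)" by simp
  have q2: "(\<epsilon>/2) * integral\<^sup>L M (\<lambda>x. (f x)^2) \<ge> (\<epsilon>/2) * ((1/4) * mb)"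
    using i2 e by (intro mult_left_mono) auto
  have c0pos: "integral\<^sup>L M (\<lambda>x. h x * (f x)^2) > 0" 
  proof -
    have "(\<epsilon>/2) * ((1/4) * mb) > 0" using e mb by simp
    then show ?thesis using q1 q2 by linarith
  qed
  define c0 where "c0 = integral\<^sup>L M (\<lambda>x. h x * (f x)^2)"
  have c0: "c0 > 0" using c0pos c0_def by simp
  obtain H where H: "\<forall>x\<in>K. \<bar>h x\<bar> \<le> H" using cont_bound[OF ch] by blast
  have H0: "H \<ge> 0" using H c by force
  define \<eta> where "\<eta> = min 1 (c0 / (6 * (H+1) * (m0+1)))"
  have eta: "\<eta> > 0" "\<eta> \<le> 1" unfolding \<eta>_def using c0 H0 m0 by auto
  have eta2: "3 * H * \<eta> * m0 < c0"
  proof -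
    have "\<eta> \<le> c0 / (6 * (H+1) * (m0+1))" unfolding \<eta>_def by simp
    moreover have "6 * (H+1) * (m0+1) > 0" using H0 m0 by simp
    ultimately have "\<eta> * (6 * (H+1) * (m0+1)) \<le> c0" by (simp only: pos_le_divide_eq)
    moreover have "3 * H * \<eta> * m0 \<le> \<eta> * (3 * (H+1) * (m0+1))"
    proof -
      have "H*m0 \<le> (H+1)*(m0+1)" using H0 m0 by (intro mult_mono) auto
      then have "\<eta>*(3*(H*m0)) \<le> \<eta>*(3*((H+1)*(m0+1)))" using eta by (intro mult_left_mono) auto
      then show ?thesis by (simp add: algebra_simps)
    qed
    moreover have "\<eta> * (3 * (H+1) * (m0+1)) < \<eta> * (6 * (H+1) * (m0+1))"
      using H0 m0 eta by (intro mult_strict_left_mono) auto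
    ultimately show ?thesis by linarith
  qed
  obtain g where g: "polynomial_function g" "\<forall>x\<in>K. norm (f x - g x) < \<eta>"
    using Stone_Weierstrass_polynomial_function[OF cpt continuous_on_subset[OF cf] eta(1)] by blast
  obtain w n where gw: "g = (\<lambda>x. \<Sum>i\<le>n. w i * x^i)"
    using g(1) real_polynomial_function_iff_sum real_polynomial_function_eq by metis
  have gP: "g x = P n w x" for x unfolding gw P_def by simp
  have cg: "continuous_on UNIV g" unfolding gw by (intro continuous_intros)
  have bnd: "AE x in M. - (3 * H * \<eta>) \<le> h x * ((g x)^2 - (f x)^2)"
    using AE_K
  proof eventually_elim
    case (elim x)
    have a: "\<bar>g x - f x\<bar> \<le> \<eta>" using g(2) elim by (simp add: abs_minus_commute less_imp_le)
    have b: "\<bar>g x + f x\<bar> \<le> 3" using a eta f01[of x] by linarith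
    have "\<bar>h x\<bar> * \<bar>g x - f x\<bar> * \<bar>g x + f x\<bar> \<le> H * \<eta> * 3"
      using H elim a b H0 by (intro mult_mono) auto
    moreover have "h x * ((g x)^2 - (f x)^2) = h x * (g x - f x) * (g x + f x)"
      by (simp add: power2_eq_square algebra_simps)
    ultimately have "\<bar>h x * ((g x)^2 - (f x)^2)\<bar> \<le> H * \<eta> * 3" by (simp only: abs_mult)
    then show ?case by (simp add: abs_le_iff algebra_simps)
  qed
  have "integral\<^sup>L M (\<lambda>x. - (3 * H * \<eta>)) \<le> integral\<^sup>L M (\<lambda>x. h x * ((g x)^2 - (f x)^2))"
    using bnd by (intro integral_mono_AE cont_integrable) (auto intro!: continuous_intros cf ch cg)
  then have i3: "integral\<^sup>L M (\<lambda>x. h x * ((g x)^2 - (f x)^2)) \<ge> - (3 * H * \<eta> * m0)"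
    unfolding m0_def by (simp add: space_M mult.commute mult.left_commute)
  have "integral\<^sup>L M (\<lambda>x. h x * (g x)^2) = integral\<^sup>L M (\<lambda>x. h x * (f x)^2 + h x * ((g x)^2 - (f x)^2))"
    by (simp add: algebra_simps)
  also have "\<dots> = c0 + integral\<^sup>L M (\<lambda>x. h x * ((g x)^2 - (f x)^2))"
    unfolding c0_def
    by (rule Bochner_Integration.integral_add; intro cont_integrable continuous_intros cf ch cg)
  finally have "integral\<^sup>L M (\<lambda>x. h x * (g x)^2) > 0" using i3 eta2 by linarith
  then show ?thesis unfolding h_def gP by blast
qed

definition "Sa d = {a. \<forall>v. 0 \<le> integral\<^sup>L M (\<lambda>x. (x - a) * (P d v x)^2)}"
definition "Sb d = {b. \<forall>v. 0 \<le> integral\<^sup>L M (\<lambda>x. (b - x) * (P d v x)^2)}"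

lemma Sa_mem: "a \<in> Sa d \<longleftrightarrow> (\<forall>v. 0 \<le> integral\<^sup>L M (\<lambda>x. (x - a) * (P d v x)^2))"
  by (simp add: Sa_def)
lemma Sb_mem: "b \<in> Sb d \<longleftrightarrow> (\<forall>v. 0 \<le> integral\<^sup>L M (\<lambda>x. (b - x) * (P d v x)^2))"
  by (simp add: Sb_def)

lemma feas: "sdp_feasible (moment_seq M) d a b \<longleftrightarrow> a \<in> Sa d \<and> b \<in> Sb d"
  unfolding sdp_feasible_def Fa Fb Sa_def Sb_def by simp

lemma lin_a: "integral\<^sup>L M (\<lambda>x. (x - a) * (P d v x)^2) =
   integral\<^sup>L M (\<lambda>x. x * (P d v x)^2) - a * integral\<^sup>L M (\<lambda>x. (P d v x)^2)"
proof -
  have "integral\<^sup>L M (\<lambda>x. (x - a) * (P d v x)^2) =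
      integral\<^sup>L M (\<lambda>x. x * (P d v x)^2 - a * (P d v x)^2)"
    by (simp add: algebra_simps)
  also have "\<dots> = integral\<^sup>L M (\<lambda>x. x * (P d v x)^2) - integral\<^sup>L M (\<lambda>x. a * (P d v x)^2)"
    by (rule Bochner_Integration.integral_diff; intro cont_integrable continuous_intros)
  finally show ?thesis by simp
qed

lemma lin_b: "integral\<^sup>L M (\<lambda>x. (b - x) * (P d v x)^2) =
   b * integral\<^sup>L M (\<lambda>x. (P d v x)^2) - integral\<^sup>L M (\<lambda>x. x * (P d v x)^2)"
proof -
  have "integral\<^sup>L M (\<lambda>x. (b - x) * (P d v x)^2) =
      integral\<^sup>L M (\<lambda>x. b * (P d v x)^2 - x * (P d v x)^2)"
    by (simp add: algebra_simps)
  also have "\<dots> = integral\<^sup>L M (\<lambda>x. b * (P d v x)^2) - integral\<^sup>L M (\<lambda>x. x * (P d v x)^2)"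
    by (rule Bochner_Integration.integral_diff; intro cont_integrable continuous_intros)
  finally show ?thesis by simp
qed

lemma s_Sa: "s \<in> Sa d"
  unfolding Sa_def using AE_K s_t(3)
  by (auto intro!: integral_nonneg_AE elim!: eventually_mono)

lemma t_Sb: "t \<in> Sb d"
  unfolding Sb_def using AE_K s_t(4)
  by (auto intro!: integral_nonneg_AE elim!: eventually_mono)

lemma P_e: "P d (\<lambda>i. if i = 0 then 1 else 0) x = 1"
proof -
  have "P d (\<lambda>i. if i = 0 then 1 else 0) x = (\<Sum>i\<le>d. if i = 0 then 1 else 0)"
    unfolding P_def by (intro sum.cong) auto
  then show ?thesis by simp
qed

lemma Sa_le_t: assumes "a \<in> Sa d" shows "a \<le> t"
proof -
  let ?e = "\<lambda>i::nat. if i = 0 then 1 else (0::real)"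
  have "0 \<le> integral\<^sup>L M (\<lambda>x. (x - a) * (P d ?e x)^2)" using assms unfolding Sa_def by blast
  then have "0 \<le> integral\<^sup>L M (\<lambda>x. x - a)" by (simp add: P_e)
  also have "\<dots> \<le> integral\<^sup>L M (\<lambda>x. t - a)"
    using AE_K s_t(4) by (intro integral_mono_AE cont_integrable continuous_intros) (auto elim!: eventually_mono)
  also have "\<dots> = (t - a) * measure M UNIV" by (simp add: space_M)
  finally show ?thesis using m0_pos by (simp add: zero_le_mult_iff)
qed

lemma Sb_ge_s: assumes "b \<in> Sb d" shows "s \<le> b"
proof -
  let ?e = "\<lambda>i::nat. if i = 0 then 1 else (0::real)"
  have "0 \<le> integral\<^sup>L M (\<lambda>x. (b - x) * (P d ?e x)^2)" using assms unfolding Sb_def by blast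
  then have "0 \<le> integral\<^sup>L M (\<lambda>x. b - x)" by (simp add: P_e)
  also have "\<dots> \<le> integral\<^sup>L M (\<lambda>x. b - s)"
    using AE_K s_t(3) by (intro integral_mono_AE cont_integrable continuous_intros) (auto elim!: eventually_mono)
  also have "\<dots> = (b - s) * measure M UNIV" by (simp add: space_M)
  finally show ?thesis using m0_pos by (simp add: zero_le_mult_iff)
qed

lemma Sup_Sa: "Sup (Sa d) \<in> Sa d"
proof -
  have ne: "Sa d \<noteq> {}" using s_Sa by blast
  have bdd: "bdd_above (Sa d)" unfolding bdd_above_def using Sa_le_t by blast
  have key: "\<forall>v. 0 \<le> integral\<^sup>L M (\<lambda>x. (x - Sup (Sa d)) * (P d v x)^2)"
  proof (intro allI)
    fix v
    define I0 where "I0 = integral\<^sup>L M (\<lambda>x. (P d v x)^2)"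
    define I1 where "I1 = integral\<^sup>L M (\<lambda>x. x * (P d v x)^2)"
    have I0: "I0 \<ge> 0" unfolding I0_def by simp
    have all: "a * I0 \<le> I1" if "a \<in> Sa d" for a
    proof -
      have "0 \<le> integral\<^sup>L M (\<lambda>x. (x - a) * (P d v x)^2)" using that unfolding Sa_def by blast
      then show ?thesis unfolding I0_def I1_def lin_a by simp
    qed
    show "0 \<le> integral\<^sup>L M (\<lambda>x. (x - Sup (Sa d)) * (P d v x)^2)"
    proof (cases "I0 = 0")
      case True
      then show ?thesis using all[OF s_Sa] lin_a I0_def I1_def by simp
    next
      case False
      then have p: "I0 > 0" using I0 by simp
      have "\<And>a. a \<in> Sa d \<Longrightarrow> a \<le> I1 / I0" using all p by (simp add: pos_le_divide_eq)
      then have "Sup (Sa d) \<le> I1 / I0" using ne by (intro cSup_least) auto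
      then have "Sup (Sa d) * I0 \<le> I1" using p by (simp add: pos_le_divide_eq)
      then show ?thesis using lin_a I0_def I1_def by simp
    qed
  qed
  show ?thesis by (rule Sa_mem[THEN iffD2, OF key])
qed

lemma Inf_Sb: "Inf (Sb d) \<in> Sb d"
proof -
  have ne: "Sb d \<noteq> {}" using t_Sb by blast
  have bdd: "bdd_below (Sb d)" unfolding bdd_below_def using Sb_ge_s by blast
  have key: "\<forall>v. 0 \<le> integral\<^sup>L M (\<lambda>x. (Inf (Sb d) - x) * (P d v x)^2)"
  proof (intro allI)
    fix v
    define I0 where "I0 = integral\<^sup>L M (\<lambda>x. (P d v x)^2)"
    define I1 where "I1 = integral\<^sup>L M (\<lambda>x. x * (P d v x)^2)"
    have I0: "I0 \<ge> 0" unfolding I0_def by simp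
    have all: "I1 \<le> b * I0" if "b \<in> Sb d" for b
    proof -
      have "0 \<le> integral\<^sup>L M (\<lambda>x. (b - x) * (P d v x)^2)" using that unfolding Sb_def by blast
      then show ?thesis unfolding I0_def I1_def lin_b by simp
    qed
    show "0 \<le> integral\<^sup>L M (\<lambda>x. (Inf (Sb d) - x) * (P d v x)^2)"
    proof (cases "I0 = 0")
      case True
      then show ?thesis using all[OF t_Sb] lin_b I0_def I1_def by simp
    next
      case False
      then have p: "I0 > 0" using I0 by simp
      have "\<And>b. b \<in> Sb d \<Longrightarrow> I1 / I0 \<le> b" using all p by (simp add: pos_divide_le_eq)
      then have "I1 / I0 \<le> Inf (Sb d)" using ne by (intro cInf_greatest) auto
      then have "I1 \<le> Inf (Sb d) * I0" using p by (simp add: pos_divide_le_eq)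
      then show ?thesis using lin_b I0_def I1_def by simp
    qed
  qed
  show ?thesis by (rule Sb_mem[THEN iffD2, OF key])
qed

lemma exists_opt: "\<exists>a b. sdp_optimal (moment_seq M) d a b"
proof (intro exI)
  have bdda: "bdd_above (Sa d)" unfolding bdd_above_def using Sa_le_t by blast
  have bddb: "bdd_below (Sb d)" unfolding bdd_below_def using Sb_ge_s by blast
  show "sdp_optimal (moment_seq M) d (Sup (Sa d)) (Inf (Sb d))"
    unfolding sdp_optimal_def feas using Sup_Sa Inf_Sb
    by (auto intro!: diff_mono cSup_upper[OF _ bdda] cInf_lower[OF _ bddb])
qed

lemma P_ext: "n \<le> d \<Longrightarrow> P d (\<lambda>i. if i \<le> n then w i else 0) x = P n w x"
  unfolding P_def by (rule sum.mono_neutral_cong_right) auto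

lemma conv:
  assumes opt: "\<And>d. sdp_optimal (moment_seq M) d (A d) (B d)"
  shows "A \<longlonglongrightarrow> s" "B \<longlonglongrightarrow> t"
proof -
  have AS: "A d \<in> Sa d" and BS: "B d \<in> Sb d" for d
    using opt[of d] unfolding sdp_optimal_def feas by auto
  have sA: "s \<le> A d" for d
  proof -
    have "B d - A d \<le> B d - s" using opt[of d] s_Sa BS unfolding sdp_optimal_def feas by blast
    then show ?thesis by simp
  qed
  have Bt: "B d \<le> t" for d
  proof -
    have "B d - A d \<le> t - A d" using opt[of d] t_Sb AS unfolding sdp_optimal_def feas by blast
    then show ?thesis by simp
  qed
  show "A \<longlonglongrightarrow> s"
  proof (rule LIMSEQ_I)
    fix r :: real assume r: "r > 0"
    obtain n w where nw: "integral\<^sup>L M (\<lambda>x. (r/2 - \<bar>x - s\<bar>) * (P n w x)^2) > 0"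
      using KEY[OF s_t(1), of "r/2"] r by auto
    show "\<exists>N. \<forall>d\<ge>N. norm (A d - s) < r"
    proof (intro exI allI impI)
      fix d assume d: "n \<le> d"
      let ?v = "\<lambda>i. if i \<le> n then w i else 0"
      have "0 \<le> integral\<^sup>L M (\<lambda>x. (x - A d) * (P d ?v x)^2)" using AS[of d] unfolding Sa_def by blast
      then have h0: "0 \<le> integral\<^sup>L M (\<lambda>x. (x - A d) * (P n w x)^2)" using P_ext[OF d] by simp
      have "A d \<le> s + r/2"
      proof (rule ccontr)
        assume c: "\<not> A d \<le> s + r/2"
        have "integral\<^sup>L M (\<lambda>x. (x - A d) * (P n w x)^2) \<le> integral\<^sup>L M (\<lambda>x. (x - (s + r/2)) * (P n w x)^2)"
          using c by (intro mono_int) (auto intro!: mult_right_mono continuous_intros)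
        also have "\<dots> = integral\<^sup>L M (\<lambda>x. - ((r/2 - \<bar>x - s\<bar>) * (P n w x)^2))"
          using AE_K s_t(3) by (intro integral_cong_AE cont_meas continuous_intros) (auto simp: algebra_simps elim!: eventually_mono)
        also have "\<dots> < 0" using nw by simp
        finally show False using h0 by simp
      qed
      then show "norm (A d - s) < r" using sA[of d] r by simp
    qed
  qed
  show "B \<longlonglongrightarrow> t"
  proof (rule LIMSEQ_I)
    fix r :: real assume r: "r > 0"
    obtain n w where nw: "integral\<^sup>L M (\<lambda>x. (r/2 - \<bar>x - t\<bar>) * (P n w x)^2) > 0"
      using KEY[OF s_t(2), of "r/2"] r by auto
    show "\<exists>N. \<forall>d\<ge>N. norm (B d - t) < r"
    proof (intro exI allI impI)
      fix d assume d: "n \<le> d"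
      let ?v = "\<lambda>i. if i \<le> n then w i else 0"
      have "0 \<le> integral\<^sup>L M (\<lambda>x. (B d - x) * (P d ?v x)^2)" using BS[of d] unfolding Sb_def by blast
      then have h0: "0 \<le> integral\<^sup>L M (\<lambda>x. (B d - x) * (P n w x)^2)" using P_ext[OF d] by simp
      have "t - r/2 \<le> B d"
      proof (rule ccontr)
        assume c: "\<not> t - r/2 \<le> B d"
        have "integral\<^sup>L M (\<lambda>x. (B d - x) * (P n w x)^2) \<le> integral\<^sup>L M (\<lambda>x. ((t - r/2) - x) * (P n w x)^2)"
          using c by (intro mono_int) (auto intro!: mult_right_mono continuous_intros)
        also have "\<dots> = integral\<^sup>L M (\<lambda>x. - ((r/2 - \<bar>x - t\<bar>) * (P n w x)^2))"
          using AE_K s_t(4) by (intro integral_cong_AE cont_meas continuous_intros) (auto simp: algebra_simps elim!: eventually_mono)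
        also have "\<dots> < 0" using nw by simp
        finally show False using h0 by simp
      qed
      then show "norm (B d - t) < r" using Bt[of d] r by simp
    qed
  qed
qed

end

theorem corollary3p4:
  fixes M :: "real measure"
  assumes "sets M = sets borel"
    and "finite_measure M"
    and "emeasure M UNIV \<noteq> 0"
    and "compact (measure_support M)"
  shows "(\<forall>d. \<exists>a b. sdp_optimal (moment_seq M) d a b)
    \<and> (\<forall>A B :: nat \<Rightarrow> real. (\<forall>d. sdp_optimal (moment_seq M) d (A d) (B d)) \<longrightarrow>
         (\<exists>as bs. as \<le> bs \<and> A \<longlonglongrightarrow> as \<and> B \<longlonglongrightarrow> bs
            \<and> measure_support M \<subseteq> {as..bs}
            \<and> (\<forall>a' b'. measure_support M \<subseteq> {a'..b'} \<longrightarrow> {as..bs} \<subseteq> {a'..b'})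
            \<and> (is_interval (measure_support M) \<longrightarrow> measure_support M = {as..bs})))"
proof -
  interpret SM M by (rule SM.intro[OF assms])
  show ?thesis
  proof (intro conjI allI impI)
    fix d show "\<exists>a b. sdp_optimal (moment_seq M) d a b" by (rule exists_opt)
  next
    fix A B :: "nat \<Rightarrow> real"
    assume opt: "\<forall>d. sdp_optimal (moment_seq M) d (A d) (B d)"
    show "\<exists>as bs. as \<le> bs \<and> A \<longlonglongrightarrow> as \<and> B \<longlonglongrightarrow> bs
            \<and> measure_support M \<subseteq> {as..bs}
            \<and> (\<forall>a' b'. measure_support M \<subseteq> {a'..b'} \<longrightarrow> {as..bs} \<subseteq> {a'..b'})
            \<and> (is_interval (measure_support M) \<longrightarrow> measure_support M = {as..bs})"
    proof (intro exI conjI allI impI)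
      show "s \<le> t" using s_t by blast
      show "A \<longlonglongrightarrow> s" "B \<longlonglongrightarrow> t" using conv opt by auto
      show sub: "measure_support M \<subseteq> {s..t}" using s_t by auto
      fix a' b' assume "measure_support M \<subseteq> {a'..b'}"
      then show "{s..t} \<subseteq> {a'..b'}" using s_t(1,2) by auto
    next
      assume iv: "is_interval (measure_support M)"
      show "measure_support M = {s..t}"
      proof (rule equalityI)
        show "measure_support M \<subseteq> {s..t}" using s_t by auto
        show "{s..t} \<subseteq> measure_support M"
        proof
          fix x assume "x \<in> {s..t}"
          then show "x \<in> measure_support M"
            using iv s_t(1,2) unfolding is_interval_1 by (meson atLeastAtMost_iff)
        qed
      qed
    qed
  qed
qed

end
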